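(* With $A_2[n]$ defined below, for $n=1,2,\dots$, $$A_2[n]=\frac{n+1}{128}\binom{3n+1}{n}\Bigl(\frac{168n^3+846n^2+1211n+510}{5}-3(n+1)(25n+34)\,F(1,-n;2n+2;-2)\Bigr),$$ where $F(a,b;c;z)$ is the Gauss hypergeometric function.
   Context: $A_0(z)$ is the unique function holomorphic near $z=0$ with $A_0(0)=0$ and $z(1+A_0(z))^3=A_0(z)$, and $$A_2(z)=A_0(z)\frac{(1+A_0(z))^6}{(1-2A_0(z))^9}\bigl(1+36A_0(z)+135A_0^2(z)+19A_0^3(z)\bigr).$$ The numbers $A_2[n]$ are defined by $A_2(z)=\sum_{n\ge1}A_2[n]z^n$. *)

theory Defs
  imports Complex_Main "HOL-Computational_Algebra.Formal_Power_Series"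
begin

text \<open>A_0 as a formal power series: the unique series with zero constant term
  satisfying z (1 + A_0)^3 = A_0.  Its coefficients are the Taylor coefficients
  of the holomorphic function A_0(z) at 0.\<close>
definition A0 :: "real fps" where
  "A0 = (THE A. fps_nth A 0 = 0 \<and> fps_X * (1 + A) ^ 3 = A)"

definition A2 :: "real fps" where
  "A2 = A0 * (1 + A0) ^ 6 * inverse ((1 - 2 * A0) ^ 9)
          * (1 + 36 * A0 + 135 * A0 ^ 2 + 19 * A0 ^ 3)"

definition gauss_F :: "real \<Rightarrow> real \<Rightarrow> real \<Rightarrow> real \<Rightarrow> real" where
  "gauss_F a b c z = (\<Sum>k. pochhammer a k * pochhammer b k / pochhammer c k
                            * z ^ k / fact k)"

end

theory Submission
  imports Defs
begin

unbundle fps_syntax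

definition ff :: "real fps" where "ff = fps_X * inverse ((1 + fps_X)^3)"

lemma ff0: "ff $ 0 = 0" by (simp add: ff_def)
lemma ff1: "ff $ 1 = 1"
  by (simp add: ff_def fps_power_zeroth)

lemma comp_ff: assumes B0: "B$0 = 0" shows "ff oo B = B * inverse ((1+B)^3)"
proof -
  have c: "((1 + fps_X :: real fps)^3) $ 0 \<noteq> 0" by (simp add: fps_power_zeroth)
  show ?thesis
  proof -
    have p: "(1 + fps_X :: real fps)^3 oo B = (1+B)^3"
      by (simp add: fps_compose_power[OF B0, symmetric] fps_compose_add_distrib B0)
    show ?thesis
      by (simp add: ff_def fps_compose_mult_distrib[OF B0] fps_inverse_compose[OF B0 c] p B0)
  qed
qed

lemma eq_iff: assumes B0: "B$0 = 0" shows "(fps_X*(1+B)^3 = B) = (ff oo B = fps_X)"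
proof -
  have c: "((1 + B)^3) $ 0 \<noteq> 0" using B0 by (simp add: fps_power_zeroth)
  have i: "(1+B)^3 * inverse ((1+B)^3) = 1" using inverse_mult_eq_1[OF c] by (simp add: mult.commute)
  show ?thesis unfolding comp_ff[OF B0]
  proof
    assume h: "fps_X * (1 + B) ^ 3 = B"
    have "B * inverse ((1 + B) ^ 3) = fps_X * ((1 + B) ^ 3 * inverse ((1 + B) ^ 3))"
      by (subst h[symmetric]) (simp only: mult.assoc)
    then show "B * inverse ((1 + B) ^ 3) = fps_X" by (simp only: i mult_1_right)
  next
    assume h: "B * inverse ((1 + B) ^ 3) = fps_X"
    have "fps_X * (1 + B) ^ 3 = B * ((1 + B) ^ 3 * inverse ((1 + B) ^ 3))"
      by (subst h[symmetric]) (simp only: mult_ac)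
    then show "fps_X * (1 + B) ^ 3 = B" by (simp only: i mult_1_right)
  qed
qed

lemma A0_eq: "A0 = fps_inv ff"
  unfolding A0_def
proof (rule the_equality)
  have i0: "fps_inv ff $ 0 = 0" by (simp add: fps_inv_def)
  show "fps_inv ff $ 0 = 0 \<and> fps_X * (1 + fps_inv ff) ^ 3 = fps_inv ff"
    using i0 eq_iff[OF i0] fps_inv_right[OF ff0] ff1 by simp
next
  fix B :: "real fps" assume B: "B $ 0 = 0 \<and> fps_X * (1 + B) ^ 3 = B"
  hence h: "ff oo B = fps_X" using eq_iff by blast
  have "B = fps_X oo B" using B by simp
  also have "\<dots> = (fps_inv ff oo ff) oo B" using fps_inv[OF ff0] ff1 by simp
  also have "\<dots> = fps_inv ff oo (ff oo B)" using fps_compose_assoc[of B ff "fps_inv ff"] B ff0 by simp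
  also have "\<dots> = fps_inv ff" using h by simp
  finally show "B = fps_inv ff" .
qed

lemma A0_0: "A0 $ 0 = 0" by (simp add: A0_eq fps_inv_def)
lemma A0_eqn: "fps_X * (1 + A0)^3 = A0"
  using eq_iff[OF A0_0] fps_inv_right[OF ff0] ff1 by (simp add: A0_eq)

definition Wf :: "real fps" where "Wf = (1 - 2*fps_X) * inverse (1 + fps_X)"
definition Q :: "nat \<Rightarrow> real fps" where "Q n = (1+fps_X)^(3*n) * Wf"

lemma binom_fps: "((1 + fps_X :: real fps)^m) $ k = of_nat (m choose k)"
  by (subst fps_binomial_of_nat[symmetric]) (simp add: binomial_gbinomial)

lemma num_nth: "(numeral k * F :: real fps) $ n = numeral k * F $ n"
  by (simp add: numeral_fps_const fps_mult_left_const_nth)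

lemma inv1X: "(1 + fps_X :: real fps) * inverse (1 + fps_X) = 1"
  by (simp add: inverse_mult_eq_1')

lemma Q_Suc: "Q (Suc m) = (1+fps_X)^3 * Q m"
  by (simp add: Q_def power_add mult.assoc)

lemma Q_Suc': "Q (Suc m) = (1+fps_X)^(3*m+2) * (1 - 2*fps_X)"
proof -
  have e: "3 * Suc m = Suc (3*m+2)" by simp
  have "Q (Suc m) = (1+fps_X)^(3*m+2) * ((1+fps_X) * inverse (1+fps_X)) * (1 - 2*fps_X)"
    unfolding Q_def Wf_def e power_Suc by (simp only: mult_ac)
  then show ?thesis by (simp add: inv1X)
qed

lemma choose_rel: "(3*m+2 choose Suc m) = 2 * (3*m+2 choose m)"
proof -
  have "Suc m * (3*m+2 choose Suc m) = (3*m+2 - m) * (3*m+2 choose m)"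
    using binomial_absorption[of m "3*m+2"] binomial_absorb_comp[of "3*m+2" m] by (simp del: binomial_Suc_Suc)
  also have "3*m+2 - m = Suc m * 2" by simp
  finally have "Suc m * (3*m+2 choose Suc m) = Suc m * (2 * (3*m+2 choose m))" by (simp only: mult.assoc)
  then show ?thesis using mult_left_cancel[of "Suc m" "3*m+2 choose Suc m" "2*(3*m+2 choose m)"] by (simp del: binomial_Suc_Suc)
qed

lemma num_nth_r: "(F * numeral k :: real fps) $ n = F $ n * numeral k"
  by (simp add: numeral_fps_const fps_mult_right_const_nth)

lemma aux12: "(P * (1 - 2*fps_X) :: real fps) $ Suc m = P $ Suc m - 2 * P $ m"
  by (simp add: algebra_simps num_nth num_nth_r)

lemma Q_diag: "Q (Suc m) $ Suc m = 0"
proof -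
  have c: "((1+fps_X :: real fps)^(3*m+2)) $ Suc m = 2 * ((1+fps_X :: real fps)^(3*m+2)) $ m"
    by (simp only: binom_fps choose_rel of_nat_mult of_nat_numeral)
  show ?thesis unfolding Q_Suc' aux12 c by simp
qed

lemma Q0: "Q 0 $ 0 = 1"
  by (simp add: Q_def Wf_def)

lemma mono: "(A0^k) $ n = (fps_X^k * Q n) $ n"
proof (induction n arbitrary: k)
  case 0
  then show ?case by (cases k) (simp_all add: fps_power_zeroth A0_0 fps_X_power_mult_nth Q0)
next
  case (Suc m)
  show ?case
  proof (cases k)
    case 0
    then show ?thesis by (simp add: Q_diag)
  next
    case (Suc j)
    have e1: "A0^k = fps_X * (A0^j + 3 * A0^(Suc j) + 3 * A0^(Suc (Suc j)) + A0^(Suc (Suc (Suc j))))"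
    proof -
      have "A0^k = A0 * A0^j" using Suc by simp
      also have "\<dots> = fps_X * (1 + A0)^3 * A0^j" using A0_eqn by simp
      also have "\<dots> = fps_X * (A0^j + 3 * A0^(Suc j) + 3 * A0^(Suc (Suc j)) + A0^(Suc (Suc (Suc j))))"
        by (simp add: algebra_simps power2_eq_square power3_eq_cube)
      finally show ?thesis .
    qed
    have e2: "fps_X^k * Q (Suc m) = fps_X * (fps_X^j * Q m + 3 * (fps_X^(Suc j) * Q m) + 3 * (fps_X^(Suc (Suc j)) * Q m) + fps_X^(Suc (Suc (Suc j))) * Q m)"
      unfolding Q_Suc using Suc
      by (simp add: algebra_simps power2_eq_square power3_eq_cube)
    show ?thesis unfolding e1 e2
      by (simp add: num_nth Suc.IH del: power_Suc)
  qed
qed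

lemma lagrange: "(G oo A0) $ n = (G * Q n) $ n"
proof -
  have "(G oo A0) $ n = (\<Sum>i=0..n. G$i * (A0^i) $ n)" by (rule fps_compose_nth)
  also have "\<dots> = (\<Sum>i=0..n. G$i * (Q n) $ (n-i))"
    by (intro sum.cong refl) (simp add: mono fps_X_power_mult_nth)
  also have "\<dots> = (G * Q n) $ n" by (simp add: fps_mult_nth)
  finally show ?thesis .
qed

definition IA :: "real fps" where "IA = inverse (1 - 2*A0)"

lemma IA_inv: "(1 - 2*A0) * IA = 1"
  unfolding IA_def by (rule inverse_mult_eq_1') (simp add: A0_0)

definition th :: "real fps \<Rightarrow> real fps" where "th F = fps_X * fps_deriv F"

lemma th_add[simp]: "th (F + G) = th F + th G" by (simp add: th_def algebra_simps)
lemma th_diff[simp]: "th (F - G) = th F - th G" by (simp add: th_def algebra_simps)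
lemma th_uminus[simp]: "th (- F) = - th F" by (simp add: th_def)
lemma th_mult[simp]: "th (F * G) = th F * G + F * th G" by (simp add: th_def algebra_simps)
lemma th_numeral[simp]: "th (numeral k) = 0" by (simp add: th_def numeral_fps_const)
lemma th_one[simp]: "th 1 = 0" by (simp add: th_def)
lemma th_zero[simp]: "th 0 = 0" by (simp add: th_def)
lemma th_power[simp]: "th (F ^ n) = of_nat n * F ^ (n - 1) * th F"
  by (simp add: th_def fps_deriv_power fps_of_nat algebra_simps)
lemma th_nth: "(th F) $ n = of_nat n * F $ n"
  by (cases n) (simp_all add: th_def)

lemma thA: "th A0 = A0 * (1 + A0) * IA"
proof -
  let ?D = "fps_deriv A0"
  have d: "?D = (1 + A0)^3 + fps_X * (3 * (1 + A0)^2 * ?D)"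
  proof -
    have "?D = fps_deriv (fps_X * (1 + A0)^3)" using A0_eqn by simp
    also have "\<dots> = (1 + A0)^3 + fps_X * (3 * (1 + A0)^2 * ?D)"
      by (simp add: fps_deriv_power fps_of_nat numeral_fps_const)
    finally show ?thesis .
  qed
  have "fps_X * ?D * (1 + A0) = fps_X * (1 + A0)^3 * (1 + A0) + 3 * (fps_X * (1 + A0)^3) * (fps_X * ?D)"
    by (subst d) (simp add: algebra_simps power2_eq_square power3_eq_cube)
  also have "\<dots> = A0 * (1 + A0) + 3 * A0 * (fps_X * ?D)" using A0_eqn by simp
  finally have e0: "fps_X * ?D * (1 + A0) = A0 * (1 + A0) + 3 * A0 * (fps_X * ?D)" .
  have e: "fps_X * ?D * (1 - 2 * A0) = A0 * (1 + A0)"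
    using e0 by algebra
  have "th A0 = fps_X * ?D * ((1 - 2*A0) * IA)" by (simp add: IA_inv th_def)
  also have "\<dots> = A0 * (1 + A0) * IA" using e by (simp add: mult.assoc[symmetric])
  finally show ?thesis .
qed

lemma thIA: "th IA = 2 * A0 * (1 + A0) * IA^3"
proof -
  have c: "(1 - 2*A0) $ 0 \<noteq> 0" by (simp add: A0_0)
  have "th IA = 2 * th A0 * IA^2"
    unfolding th_def IA_def fps_inverse_deriv[OF c] by (simp add: algebra_simps numeral_fps_const)
  then show ?thesis by (simp add: thA power2_eq_square power3_eq_cube mult_ac)
qed

lemma step_alg:
  fixes a i j m n c :: "'a::comm_ring_1"
  assumes "(1 - 2*a)*i = 1"
  shows "m*i*(i*j) + n*(c*j*(2*a*(1+a)*i^3)) = (m*(1-2*a) + 2*c*n*a*(1+a))*(i^3*j)"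
proof -
  have "(m*(1-2*a) + 2*c*n*a*(1+a))*(i^3*j) = m*i*(i*j)*((1-2*a)*i) + n*(c*j*(2*a*(1+a)*i^3))"
    by (simp add: algebra_simps power3_eq_cube)
  then show ?thesis using assms by simp
qed

lemma step:
  assumes h: "th N = M * IA" and k: "K = M*(1-2*A0) + 2*of_nat e*N*A0*(1+A0)" and e: "e \<ge> 1"
    and e2: "e2 = e + 2"
  shows "th (N * IA^e) = K * IA^e2"
proof -
  obtain d where d: "e = Suc d" using e by (cases e) auto
  have "th (N * IA^e) = M * IA * (IA * IA^d) + N * (of_nat e * IA^d * (2 * A0 * (1 + A0) * IA^3))"
  proof -
    have p: "th (IA^e) = of_nat e * IA^d * th IA" unfolding d by (simp only: th_power diff_Suc_1)
    show ?thesis unfolding th_mult p h thIA unfolding d power_Suc ..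
  qed
  also have "\<dots> = K * (IA^3 * IA^d)"
    unfolding k using step_alg[OF IA_inv] by simp
  also have "\<dots> = K * IA^e2" by (simp add: e2 d power_add mult_ac power3_eq_cube)
  finally show ?thesis .
qed

definition TT :: "nat \<Rightarrow> real fps" where "TT j = (th ^^ j) ((1+A0)^2 * IA)"
definition UU :: "nat \<Rightarrow> real fps" where "UU j = (th ^^ j) ((1+A0)^2 * IA^2)"

lemma IA_pow9: "e \<le> 9 \<Longrightarrow> IA^e = (1-2*A0)^(9-e) * IA^9"
proof -
  assume e: "e \<le> 9"
  have "(1-2*A0)^(9-e) * IA^9 = ((1-2*A0)*IA)^(9-e) * IA^e"
    using e by (simp add: power_mult_distrib power_add[symmetric] mult_ac)
  then show ?thesis by (simp add: IA_inv)
qed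

lemma T_0: "TT 0 = (1 + 2*A0 + A0^2) * IA^1"
  unfolding TT_def by (simp only: funpow_0) algebra

lemma TT_Suc: "TT (Suc j) = th (TT j)" by (simp add: TT_def)

lemma T_1: "TT 1 = (4*A0 + 6*A0^2 - 2*A0^4) * IA^3"
proof -
  have hM: "th (1 + 2*A0 + A0^2) = (2*A0 + 4*A0^2 + 2*A0^3) * IA"
    by (simp add: thA) algebra
  have hK: "(4*A0 + 6*A0^2 - 2*A0^4) = (2*A0 + 4*A0^2 + 2*A0^3) * (1-2*A0) + 2*of_nat 1*(1 + 2*A0 + A0^2)*A0*(1+A0)"
    by (simp only: of_nat_numeral of_nat_1) algebra
  have "TT 1 = th (TT 0)" using TT_Suc[of 0] by (simp add: eval_nat_numeral)
  also have "\<dots> = (4*A0 + 6*A0^2 - 2*A0^4) * IA^3" unfolding T_0 by (rule step[OF hM hK]) simp_all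
  finally show ?thesis .
qed

lemma T_2: "TT 2 = (4*A0 + 32*A0^2 + 40*A0^3 + 4*A0^4 - 4*A0^5 + 4*A0^6) * IA^5"
proof -
  have hM: "th (4*A0 + 6*A0^2 - 2*A0^4) = (4*A0 + 16*A0^2 + 12*A0^3 - 8*A0^4 - 8*A0^5) * IA"
    by (simp add: thA) algebra
  have hK: "(4*A0 + 32*A0^2 + 40*A0^3 + 4*A0^4 - 4*A0^5 + 4*A0^6) = (4*A0 + 16*A0^2 + 12*A0^3 - 8*A0^4 - 8*A0^5) * (1-2*A0) + 2*of_nat 3*(4*A0 + 6*A0^2 - 2*A0^4)*A0*(1+A0)"
    by (simp only: of_nat_numeral of_nat_1) algebra
  have "TT 2 = th (TT 1)" using TT_Suc[of 1] by (simp add: eval_nat_numeral)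
  also have "\<dots> = (4*A0 + 32*A0^2 + 40*A0^3 + 4*A0^4 - 4*A0^5 + 4*A0^6) * IA^5" unfolding T_1 by (rule step[OF hM hK]) simp_all
  finally show ?thesis .
qed

lemma T_3: "TT 3 = (4*A0 + 100*A0^2 + 408*A0^3 + 488*A0^4 + 164*A0^5 + 12*A0^6 + 16*A0^7 - 8*A0^8) * IA^7"
proof -
  have hM: "th (4*A0 + 32*A0^2 + 40*A0^3 + 4*A0^4 - 4*A0^5 + 4*A0^6) = (4*A0 + 68*A0^2 + 184*A0^3 + 136*A0^4 - 4*A0^5 + 4*A0^6 + 24*A0^7) * IA"
    by (simp add: thA) algebra
  have hK: "(4*A0 + 100*A0^2 + 408*A0^3 + 488*A0^4 + 164*A0^5 + 12*A0^6 + 16*A0^7 - 8*A0^8) = (4*A0 + 68*A0^2 + 184*A0^3 + 136*A0^4 - 4*A0^5 + 4*A0^6 + 24*A0^7) * (1-2*A0) + 2*of_nat 5*(4*A0 + 32*A0^2 + 40*A0^3 + 4*A0^4 - 4*A0^5 + 4*A0^6)*A0*(1+A0)"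
    by (simp only: of_nat_numeral of_nat_1) algebra
  have "TT 3 = th (TT 2)" using TT_Suc[of 2] by (simp add: eval_nat_numeral)
  also have "\<dots> = (4*A0 + 100*A0^2 + 408*A0^3 + 488*A0^4 + 164*A0^5 + 12*A0^6 + 16*A0^7 - 8*A0^8) * IA^7" unfolding T_2 by (rule step[OF hM hK]) simp_all
  finally show ?thesis .
qed

lemma T_4: "TT 4 = (4*A0 + 252*A0^2 + 2472*A0^3 + 7440*A0^4 + 8964*A0^5 + 4476*A0^6 + 864*A0^7 + 72*A0^8 - 48*A0^9 + 16*A0^10) * IA^9"
proof -
  have hM: "th (4*A0 + 100*A0^2 + 408*A0^3 + 488*A0^4 + 164*A0^5 + 12*A0^6 + 16*A0^7 - 8*A0^8) = (4*A0 + 204*A0^2 + 1424*A0^3 + 3176*A0^4 + 2772*A0^5 + 892*A0^6 + 184*A0^7 + 48*A0^8 - 64*A0^9) * IA"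
    by (simp add: thA) algebra
  have hK: "(4*A0 + 252*A0^2 + 2472*A0^3 + 7440*A0^4 + 8964*A0^5 + 4476*A0^6 + 864*A0^7 + 72*A0^8 - 48*A0^9 + 16*A0^10) = (4*A0 + 204*A0^2 + 1424*A0^3 + 3176*A0^4 + 2772*A0^5 + 892*A0^6 + 184*A0^7 + 48*A0^8 - 64*A0^9) * (1-2*A0) + 2*of_nat 7*(4*A0 + 100*A0^2 + 408*A0^3 + 488*A0^4 + 164*A0^5 + 12*A0^6 + 16*A0^7 - 8*A0^8)*A0*(1+A0)"
    by (simp only: of_nat_numeral of_nat_1) algebra
  have "TT 4 = th (TT 3)" using TT_Suc[of 3] by (simp add: eval_nat_numeral)
  also have "\<dots> = (4*A0 + 252*A0^2 + 2472*A0^3 + 7440*A0^4 + 8964*A0^5 + 4476*A0^6 + 864*A0^7 + 72*A0^8 - 48*A0^9 + 16*A0^10) * IA^9" unfolding T_3 by (rule step[OF hM hK]) simp_all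
  finally show ?thesis .
qed

lemma U_0: "UU 0 = (1 + 2*A0 + A0^2) * IA^2"
  unfolding UU_def by (simp only: funpow_0) algebra

lemma UU_Suc: "UU (Suc j) = th (UU j)" by (simp add: UU_def)

lemma U_1: "UU 1 = (6*A0 + 12*A0^2 + 6*A0^3) * IA^4"
proof -
  have hM: "th (1 + 2*A0 + A0^2) = (2*A0 + 4*A0^2 + 2*A0^3) * IA"
    by (simp add: thA) algebra
  have hK: "(6*A0 + 12*A0^2 + 6*A0^3) = (2*A0 + 4*A0^2 + 2*A0^3) * (1-2*A0) + 2*of_nat 2*(1 + 2*A0 + A0^2)*A0*(1+A0)"
    by (simp only: of_nat_numeral of_nat_1) algebra
  have "UU 1 = th (UU 0)" using UU_Suc[of 0] by (simp add: eval_nat_numeral)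
  also have "\<dots> = (6*A0 + 12*A0^2 + 6*A0^3) * IA^4" unfolding U_0 by (rule step[OF hM hK]) simp_all
  finally show ?thesis .
qed

lemma U_2: "UU 2 = (6*A0 + 66*A0^2 + 126*A0^3 + 78*A0^4 + 12*A0^5) * IA^6"
proof -
  have hM: "th (6*A0 + 12*A0^2 + 6*A0^3) = (6*A0 + 30*A0^2 + 42*A0^3 + 18*A0^4) * IA"
    by (simp add: thA) algebra
  have hK: "(6*A0 + 66*A0^2 + 126*A0^3 + 78*A0^4 + 12*A0^5) = (6*A0 + 30*A0^2 + 42*A0^3 + 18*A0^4) * (1-2*A0) + 2*of_nat 4*(6*A0 + 12*A0^2 + 6*A0^3)*A0*(1+A0)"
    by (simp only: of_nat_numeral of_nat_1) algebra
  have "UU 2 = th (UU 1)" using UU_Suc[of 1] by (simp add: eval_nat_numeral)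
  also have "\<dots> = (6*A0 + 66*A0^2 + 126*A0^3 + 78*A0^4 + 12*A0^5) * IA^6" unfolding U_1 by (rule step[OF hM hK]) simp_all
  finally show ?thesis .
qed

lemma U_3: "UU 3 = (6*A0 + 198*A0^2 + 1098*A0^3 + 1974*A0^4 + 1440*A0^5 + 396*A0^6 + 24*A0^7) * IA^8"
proof -
  have hM: "th (6*A0 + 66*A0^2 + 126*A0^3 + 78*A0^4 + 12*A0^5) = (6*A0 + 138*A0^2 + 510*A0^3 + 690*A0^4 + 372*A0^5 + 60*A0^6) * IA"
    by (simp add: thA) algebra
  have hK: "(6*A0 + 198*A0^2 + 1098*A0^3 + 1974*A0^4 + 1440*A0^5 + 396*A0^6 + 24*A0^7) = (6*A0 + 138*A0^2 + 510*A0^3 + 690*A0^4 + 372*A0^5 + 60*A0^6) * (1-2*A0) + 2*of_nat 6*(6*A0 + 66*A0^2 + 126*A0^3 + 78*A0^4 + 12*A0^5)*A0*(1+A0)"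
    by (simp only: of_nat_numeral of_nat_1) algebra
  have "UU 3 = th (UU 2)" using UU_Suc[of 2] by (simp add: eval_nat_numeral)
  also have "\<dots> = (6*A0 + 198*A0^2 + 1098*A0^3 + 1974*A0^4 + 1440*A0^5 + 396*A0^6 + 24*A0^7) * IA^8" unfolding U_2 by (rule step[OF hM hK]) simp_all
  finally show ?thesis .
qed

lemma A2_IA: "A2 = A0*(1+A0)^6*(1 + 36*A0 + 135*A0^2 + 19*A0^3) * IA^9"
  by (simp add: A2_def IA_def fps_inverse_power mult_ac)

lemma main_id: "640 * A2 = 510*TT 0 + 1721*TT 1 + 2057*TT 2 + 1014*TT 3 + 168*TT 4 - 510*UU 0 - 1395*UU 1 - 1260*UU 2 - 375*UU 3"
proof -
  have i1: "IA^1 = (1-2*A0)^8 * IA^9" using IA_pow9[of 1] by simp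
  have i2: "IA^2 = (1-2*A0)^7 * IA^9" using IA_pow9[of 2] by simp
  have i3: "IA^3 = (1-2*A0)^6 * IA^9" using IA_pow9[of 3] by simp
  have i4: "IA^4 = (1-2*A0)^5 * IA^9" using IA_pow9[of 4] by simp
  have i5: "IA^5 = (1-2*A0)^4 * IA^9" using IA_pow9[of 5] by simp
  have i6: "IA^6 = (1-2*A0)^3 * IA^9" using IA_pow9[of 6] by simp
  have i7: "IA^7 = (1-2*A0)^2 * IA^9" using IA_pow9[of 7] by simp
  have i8: "IA^8 = (1-2*A0)^1 * IA^9" using IA_pow9[of 8] by simp
  show ?thesis unfolding A2_IA T_0 T_1 T_2 T_3 T_4 U_0 U_1 U_2 U_3 i1 i2 i3 i4 i5 i6 i7 i8
    by algebra
qed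

lemma final_alg:
  fixes x B G a2 u :: real
  assumes h: "640*a2 = 510*B + 1721*(x*B) + 2057*(x^2*B) + 1014*(x^3*B) + 168*(x^4*B)
              - 510*u - 1395*(x*u) - 1260*(x^2*u) - 375*(x^3*u)"
    and u: "B * G = u"
  shows "a2 = (x + 1) / 128 * B * ((168 * x ^ 3 + 846 * x ^ 2 + 1211 * x + 510) / 5
     - 3 * (x + 1) * (25 * x + 34) * G)"
proof -
  have "a2 = (510*B + 1721*(x*B) + 2057*(x^2*B) + 1014*(x^3*B) + 168*(x^4*B)
              - 510*(B*G) - 1395*(x*(B*G)) - 1260*(x^2*(B*G)) - 375*(x^3*(B*G))) / 640"
    using h u by simp
  also have "\<dots> = (x + 1) / 128 * B * ((168 * x ^ 3 + 846 * x ^ 2 + 1211 * x + 510) / 5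
     - 3 * (x + 1) * (25 * x + 34) * G)"
    by (simp add: field_simps) algebra
  finally show ?thesis .
qed

lemma TT_nth: "(TT j) $ n = real n ^ j * (TT 0) $ n"
  by (induction j) (simp_all add: TT_Suc th_nth)

lemma UU_nth: "(UU j) $ n = real n ^ j * (UU 0) $ n"
  by (induction j) (simp_all add: UU_Suc th_nth)

lemma c12: "(1 - 2*fps_X :: real fps) $ 0 \<noteq> 0" by simp

lemma comp12: "(1 - 2*fps_X) oo A0 = 1 - 2*A0"
  by (simp add: fps_compose_sub_distrib fps_compose_mult_distrib[OF A0_0] numeral_fps_const A0_0)

lemma comp1X: "(1 + fps_X) oo A0 = 1 + A0"
  by (simp add: fps_compose_add_distrib A0_0)

lemma TT0_comp: "TT 0 = ((1+fps_X)^2 * inverse (1 - 2*fps_X)) oo A0"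
  by (simp add: TT_def IA_def fps_compose_mult_distrib[OF A0_0] fps_compose_power[OF A0_0, symmetric]
      fps_inverse_compose[OF A0_0 c12] comp12 comp1X)

lemma UU0_comp: "UU 0 = ((1+fps_X)^2 * inverse (1 - 2*fps_X)^2) oo A0"
  by (simp add: UU_def IA_def fps_compose_mult_distrib[OF A0_0] fps_compose_power[OF A0_0, symmetric]
      fps_inverse_compose[OF A0_0 c12] comp12 comp1X)

lemma inv12: "(1 - 2*fps_X :: real fps) * inverse (1 - 2*fps_X) = 1"
  by (rule inverse_mult_eq_1') simp

lemma GQ: "(1+fps_X)^2 * G * Q n = (1+fps_X)^(3*n+1) * G * ((1 + fps_X) * inverse (1 + fps_X)) * (1 - 2*fps_X)"
  by (simp add: Q_def Wf_def power_add power2_eq_square mult_ac)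

lemma TT0_nth: "(TT 0) $ n = real (3*n+1 choose n)"
proof -
  have "(TT 0) $ n = ((1+fps_X)^(3*n+1) * ((1 - 2*fps_X) * inverse (1 - 2*fps_X))) $ n"
    unfolding TT0_comp lagrange GQ inv1X by (simp only: mult_ac mult_1_right mult_1_left)
  then show ?thesis by (simp only: inv12 mult_1_right binom_fps)
qed

lemma inv12_eq: "inverse (1 - 2*fps_X :: real fps) = Abs_fps (\<lambda>k. 2^k)"
proof (rule fps_inverse_unique)
  show "(1 - 2*fps_X) * Abs_fps (\<lambda>k. 2^k) = (1 :: real fps)"
  proof (rule fps_ext)
    fix k show "((1 - 2*fps_X) * Abs_fps (\<lambda>k. 2^k)) $ k = (1 :: real fps) $ k"
      by (cases k) (simp_all add: algebra_simps num_nth)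
  qed
qed

lemma UU0_nth: "(UU 0) $ n = (\<Sum>i=0..n. real (3*n+1 choose i) * 2^(n-i))"
proof -
  have "(UU 0) $ n = ((1+fps_X)^(3*n+1) * inverse (1 - 2*fps_X) * ((1 - 2*fps_X) * inverse (1 - 2*fps_X))) $ n"
    unfolding UU0_comp lagrange GQ inv1X by (simp only: mult_ac mult_1_right mult_1_left power2_eq_square)
  then show ?thesis unfolding inv12 mult_1_right by (simp only: binom_fps inv12_eq fps_mult_nth fps_nth_Abs_fps)
qed

lemma poch_fact: "pochhammer (real a + 1) k = fact (a + k) / fact a"
proof -
  have h: "fact (a + k) = (fact a * pochhammer (real a + 1) k :: real)"
    using pochhammer_product'[of "1::real" a k] by (simp only: pochhammer_fact[symmetric] add.commute)
  have "fact a \<noteq> (0::real)" by simp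
  then show ?thesis unfolding h by simp
qed
lemma alg2:
  fixes F fn f2 fk fnk f2k s1 s2 P :: real
  assumes "fn \<noteq> 0" "f2 \<noteq> 0" "fk \<noteq> 0" "fnk \<noteq> 0" "f2k \<noteq> 0" "s1 * s2 = P"
  shows "F / (fn * f2) * (fk * (s1 * (fn / fnk)) / (f2k / f2) * s2 / fk) = P * (F / (fnk * f2k))"
proof -
  have "F / (fn * f2) * (fk * (s1 * (fn / fnk)) / (f2k / f2) * s2 / fk) = (s1 * s2) * (F / (fnk * f2k))"
    using assms by (simp add: field_simps)
  then show ?thesis using assms by simp
qed

lemma term_eq:
  assumes k: "k \<le> n"
  shows "real (3*n+1 choose n) * (pochhammer 1 k * pochhammer (- real n) k / pochhammer (2 * real n + 2) k
           * (-2) ^ k / fact k) = 2^k * real (3*n+1 choose (n-k))"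
proof -
  have p1: "pochhammer (1::real) k = fact k" by (simp add: pochhammer_fact)
  have p2: "pochhammer (- real n) k = (-1)^k * (fact n / fact (n-k))"
  proof -
    have e: "real n - real k + 1 = real (n-k) + 1" using k by simp
    have "pochhammer (- real n) k = (-1)^k * pochhammer (real (n-k) + 1) k"
      using pochhammer_minus[of "real n" k] unfolding e .
    also have "\<dots> = (-1)^k * (fact n / fact (n-k))"
    proof -
      have "n - k + k = n" using k by simp
      then show ?thesis by (simp only: poch_fact)
    qed
    finally show ?thesis .
  qed
  have p3: "pochhammer (2 * real n + 2) k = fact (2*n+1+k) / fact (2*n+1)"
  proof -
    have "2 * real n + 2 = real (2*n+1) + 1" by simp
    then show ?thesis by (simp only: poch_fact)
  qed
  have b1: "real (3*n+1 choose n) = fact (3*n+1) / (fact n * fact (2*n+1))"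
  proof -
    have le: "n \<le> 3*n+1" by simp
    have e: "3*n+1-n = 2*n+1" by simp
    show ?thesis using binomial_fact[OF le, where 'a=real] unfolding e .
  qed
  have b2: "real (3*n+1 choose (n-k)) = fact (3*n+1) / (fact (n-k) * fact (2*n+1+k))"
  proof -
    have "3*n+1 - (n-k) = 2*n+1+k" using k by simp
    moreover have le: "n-k \<le> 3*n+1" by simp
    ultimately show ?thesis using binomial_fact[OF le, where 'a=real] by (simp only:)
  qed
  have s: "(-1::real)^k * (-2)^k = 2^k" by (simp add: power_mult_distrib[symmetric])
  show ?thesis unfolding p1 p2 p3 b1 b2
    by (rule alg2[OF _ _ _ _ _ s]) simp_all
qed

lemma F_sum: "real (3*n+1 choose n) * gauss_F 1 (- real n) (2 * real n + 2) (-2)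
   = (\<Sum>i=0..n. real (3*n+1 choose i) * 2^(n-i))"
proof -
  let ?f = "\<lambda>k. pochhammer 1 k * pochhammer (- real n) k / pochhammer (2 * real n + 2) k * (-2) ^ k / fact k :: real"
  have z: "?f k = 0" if "k \<notin> {0..n}" for k
  proof -
    have "pochhammer (- real n) k = 0" using that by (intro pochhammer_of_nat_eq_0_lemma) simp
    then show ?thesis by simp
  qed
  have "gauss_F 1 (- real n) (2 * real n + 2) (-2) = (\<Sum>k=0..n. ?f k)"
    unfolding gauss_F_def by (rule suminf_finite) (use z in auto)
  then have "real (3*n+1 choose n) * gauss_F 1 (- real n) (2 * real n + 2) (-2)
      = (\<Sum>k=0..n. 2^k * real (3*n+1 choose (n-k)))"
  proof -
    have "real (3*n+1 choose n) * gauss_F 1 (- real n) (2 * real n + 2) (-2) = (\<Sum>k=0..n. real (3*n+1 choose n) * ?f k)"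
      unfolding \<open>gauss_F 1 (- real n) (2 * real n + 2) (-2) = (\<Sum>k=0..n. ?f k)\<close> by (rule sum_distrib_left)
    also have "\<dots> = (\<Sum>k=0..n. 2^k * real (3*n+1 choose (n-k)))"
      by (rule sum.cong[OF refl], rule term_eq) simp
    finally show ?thesis .
  qed
  also have "\<dots> = (\<Sum>i=0..n. real (3*n+1 choose i) * 2^(n-i))"
    by (subst sum.atLeastAtMost_rev) (simp add: mult.commute)
  finally show ?thesis .
qed

theorem proposition7:
  fixes n :: nat
  assumes "n \<ge> 1"
  shows "fps_nth A2 n =
    (real n + 1) / 128 * real ((3 * n + 1) choose n) *
    ((168 * real n ^ 3 + 846 * real n ^ 2 + 1211 * real n + 510) / 5
     - 3 * (real n + 1) * (25 * real n + 34)
       * gauss_F 1 (- real n) (2 * real n + 2) (-2))"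
proof (rule final_alg)
  have "(640 * A2) $ n = (510*TT 0 + 1721*TT 1 + 2057*TT 2 + 1014*TT 3 + 168*TT 4 - 510*UU 0 - 1395*UU 1 - 1260*UU 2 - 375*UU 3) $ n"
    by (simp only: main_id)
  then show "640 * A2 $ n = 510 * real (3 * n + 1 choose n) + 1721 * (real n * real (3 * n + 1 choose n)) +
    2057 * (real n ^ 2 * real (3 * n + 1 choose n)) + 1014 * (real n ^ 3 * real (3 * n + 1 choose n)) +
    168 * (real n ^ 4 * real (3 * n + 1 choose n)) - 510 * (\<Sum>i=0..n. real (3*n+1 choose i) * 2^(n-i)) -
    1395 * (real n * (\<Sum>i=0..n. real (3*n+1 choose i) * 2^(n-i))) -
    1260 * (real n ^ 2 * (\<Sum>i=0..n. real (3*n+1 choose i) * 2^(n-i))) -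
    375 * (real n ^ 3 * (\<Sum>i=0..n. real (3*n+1 choose i) * 2^(n-i)))"
    by (simp only: fps_add_nth fps_sub_nth num_nth TT_nth[of 1 n] TT_nth[of 2 n] TT_nth[of 3 n] TT_nth[of 4 n] UU_nth[of 1 n] UU_nth[of 2 n] UU_nth[of 3 n] TT0_nth UU0_nth power_one_right)
  show "real (3 * n + 1 choose n) * gauss_F 1 (- real n) (2 * real n + 2) (- 2) = (\<Sum>i=0..n. real (3*n+1 choose i) * 2^(n-i))"
    by (rule F_sum)
qed

end
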